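(* Let $\psi_n(x)=e^{-n^{1/2}x^2/2}\big(\cosh(xn^{-1/4})\big)^n$ and $I_\infty=\int_{\mathbb{R}}e^{-x^4/12}dx$. For every $b\ge0$ and every $\eta>0$ there is $n_0$ such that for all $n\ge n_0$ and all $\xi\in\mathbb{R}$, $$|\widehat{\psi_n}(\xi)|\le(1+\eta)\,K(b)\,e^{-b|\xi|},\qquad K(b)=2e^{13b^4/12}\big(2\sqrt3\,b+I_\infty\big),$$ where $\widehat{\psi_n}(\xi)=\int_{\mathbb{R}}\psi_n(x)e^{i\xi x}dx$. *)

theory Defs
  imports "HOL-Analysis.Analysis"
begin

definition psi :: "nat \<Rightarrow> real \<Rightarrow> real" where
  "psi n x = exp (- (sqrt (real n)) * x\<^sup>2 / 2) * (cosh (x * real n powr (-1/4))) ^ n"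

definition I_inf :: real where
  "I_inf = integral UNIV (\<lambda>x::real. exp (- (x ^ 4) / 12))"

definition psi_hat :: "nat \<Rightarrow> real \<Rightarrow> complex" where
  "psi_hat n \<xi> = integral UNIV (\<lambda>x::real. complex_of_real (psi n x) * cis (\<xi> * x))"

definition K :: "real \<Rightarrow> real" where
  "K b = 2 * exp (13 * b ^ 4 / 12) * (2 * sqrt 3 * b + I_inf)"

end

theory Submission
  imports Defs "HOL-Probability.Characteristic_Functions" "HOL-Real_Asymp.Real_Asymp"
begin


lemma fact_ineq: "k \<ge> 1 \<Longrightarrow> 6^k * fact k \<le> (3::real) * fact (2*k)"
proof (induction k rule: nat_induct_at_least)
  case base
  then show ?case by (simp add: numeral_2_eq_2)
next
  case (Suc k)
  have "(6::real)^(Suc k) * fact (Suc k) = (6 * real (Suc k)) * ((6::real)^k * fact k)" by (simp add: algebra_simps)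
  also have "\<dots> \<le> (6 * real (Suc k)) * (3 * (fact (2*k)::real))" using Suc by (intro mult_left_mono) auto
  also have "\<dots> \<le> (real (2*k+2) * real (2*k+1)) * (3 * (fact (2*k)::real))"
  proof (intro mult_right_mono)
    have "real k \<ge> 1" using Suc by simp
    hence "real k * real k \<ge> 1 * 1" by (intro mult_mono) auto
    thus "6 * real (Suc k) \<le> real (2*k+2) * real (2*k+1)" by (simp add: algebra_simps)
  qed simp
  also have "\<dots> = 3 * fact (2 * Suc k)"
  proof -
    have "2 * Suc k = Suc (Suc (2*k))" by simp
    hence "fact (2 * Suc k) = (real (2*k+2) * real (2*k+1)) * (fact (2*k) :: real)"
      by (simp only: fact_Suc) (simp add: algebra_simps)
    thus ?thesis by simp
  qed
  finally show ?case .
qed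

lemma exp_sums_real: "(\<lambda>k. (v::real) ^ k / fact k) sums exp v"
  using exp_converges[of v] by (simp add: divide_inverse_commute)

lemma cosh_le_aux: "cosh (u::real) \<le> 3 * exp (u^2/6) - 2"
proof -
  have A: "(\<lambda>n. if even n then u ^ n /\<^sub>R fact n else 0) sums cosh u" by (rule cosh_converges)
  have "(\<lambda>k. (\<lambda>n. if even n then u ^ n /\<^sub>R fact n else 0) ((*) 2 k)) sums cosh u"
    by (subst sums_mono_reindex) (auto simp: strict_mono_def A elim!: evenE)
  hence A': "(\<lambda>k. u^(2*k) / fact (2*k)) sums cosh u" by (simp add: divide_inverse mult.commute)
  have A2: "(\<lambda>k. u^(2*k) / fact (2*k) + (if k = 0 then 2 else 0)) sums (cosh u + 2)"
    using sums_add[OF A' sums_single[of 0 "\<lambda>_. 2::real"]] by simp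
  have B': "(\<lambda>k. 3 * ((u^2/6) ^ k / fact k)) sums (3 * exp (u^2/6))"
    by (rule sums_mult[OF exp_sums_real])
  have le: "u^(2*k) / fact (2*k) + (if k = 0 then 2 else 0) \<le> 3 * ((u^2/6) ^ k / fact k)" for k
  proof (cases "k = 0")
    case False
    hence h1: "6^k * fact k \<le> (3::real) * fact (2*k)" by (intro fact_ineq) auto
    have h2: "(u^2/6)^k = u^(2*k) / 6^k" by (simp add: power_mult power_divide)
    have h3: "u^(2*k) \<ge> 0" by (simp add: power_mult)
    have "u^(2*k) / fact (2*k) = (3 * u^(2*k)) / (3 * fact (2*k))" by simp
    also have "\<dots> \<le> (3 * u^(2*k)) / (6^k * fact k)"
      using h1 h3 by (intro divide_left_mono) auto
    also have "\<dots> = 3 * (u^(2*k) / 6^k / fact k)" by simp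
    finally show ?thesis using False h2 by simp
  qed simp
  have "cosh u + 2 \<le> 3 * exp (u^2/6)" by (rule sums_le[OF _ A2 B']) (use le in blast)
  thus ?thesis by simp
qed


lemma sin_lower: fixes v :: real assumes "0 \<le> v" "v \<le> 1" shows "v - 7/40 * v^3 \<le> sin v"
proof -
  have h0: "\<bar>sin v - (\<Sum>m<5. sin_coeff m * v ^ m)\<bar> \<le> inverse (fact 5) * \<bar>v\<bar> ^ 5"
    by (rule Maclaurin_sin_bound)
  have "(\<Sum>m<5. sin_coeff m * v ^ m) = v - v^3/6"
  proof -
    have c: "sin_coeff 1 = 1" "sin_coeff 2 = 0" "sin_coeff 3 = -1/6" "sin_coeff 4 = 0"
      by (simp_all add: sin_coeff_def fact_numeral)
    have "{..<5::nat} = {0,1,2,3,4}" by auto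
    thus ?thesis using c by simp
  qed
  moreover have "(fact 5::real) = 120" by (simp add: fact_numeral)
  ultimately have h: "\<bar>sin v - (v - v^3/6)\<bar> \<le> v^5/120" using h0 assms by simp
  have h2: "-(sin v - (v - v^3/6)) \<le> v^5/120" using h abs_ge_minus_self order_trans by blast
  have "v^5 \<le> v^3" using assms by (intro power_decreasing) auto
  thus ?thesis using h2 by linarith
qed

lemma sin_sq_lower: fixes v :: real assumes "\<bar>v\<bar> \<le> 1" shows "v^2 - 7/20 * v^4 \<le> (sin v)^2"
proof -
  have *: "w^2 - 7/20 * w^4 \<le> (sin w)^2" if "0 \<le> w" "w \<le> 1" for w :: real
  proof -
    have "w * w \<le> 1" using that by (intro mult_le_one) auto
    hence w2: "w^2 \<le> 1" by (simp add: power2_eq_square)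
    have "0 \<le> w - 7/40 * w^3"
    proof -
      have "7/40 * w^3 = w * (7/40 * w^2)" by (simp add: power3_eq_cube power2_eq_square)
      also have "\<dots> \<le> w * 1" using that w2 by (intro mult_left_mono) auto
      finally show ?thesis by simp
    qed
    hence "(w - 7/40 * w^3)^2 \<le> (sin w)^2" using sin_lower[OF that] by (intro power_mono) auto
    moreover have "(w - 7/40 * w^3)^2 = w^2 - 7/20 * w^4 + (7/40)^2 * w^6" by (simp add: algebra_simps power2_eq_square) (simp add: power_def eval_nat_numeral)
    moreover have "w^6 \<ge> 0" using that by simp
    ultimately show ?thesis by (smt (verit) mult_nonneg_nonneg zero_le_power2)
  qed
  show ?thesis
  proof (cases "v \<ge> 0")
    case True thus ?thesis using * assms by auto
  next
    case False
    have "(-v)^2 - 7/20 * (-v)^4 \<le> (sin (-v))^2" using assms False by (intro *) auto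
    thus ?thesis by simp
  qed
qed

lemma cosh_le_exp_sq: "cosh (u::real) \<le> exp (u^2/2)"
proof -
  define y where "y = exp (u^2/6)"
  have y1: "y \<ge> 1" unfolding y_def by simp
  have "cosh u \<le> 3 * y - 2" unfolding y_def by (rule cosh_le_aux)
  also have "3 * y - 2 \<le> y^3"
  proof -
    have "y^3 - 3*y + 2 = (y - 1)^2 * (y + 2)" by (simp add: algebra_simps power2_eq_square power3_eq_cube)
    also have "\<dots> \<ge> 0" using y1 by simp
    finally show ?thesis by simp
  qed
  also have "y^3 = exp (u^2/2)" unfolding y_def by (simp add: exp_of_nat_mult[symmetric])
  finally show ?thesis .
qed

lemma cosh_sq_bound: "(cosh u)^2 * (1 - u^2) \<le> (1::real)"
proof (cases "u^2 \<le> 1")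
  case True
  have "(cosh u)^2 \<le> exp (u^2/2) ^ 2" by (intro power_mono cosh_le_exp_sq) auto
  also have "\<dots> = exp (u^2)" by (simp add: exp_double[symmetric] power2_eq_square[of "exp _"] exp_add[symmetric])
  finally have a: "(cosh u)^2 \<le> exp (u^2)" .
  have b: "1 - u^2 \<le> exp (-(u^2))" using exp_ge_add_one_self[of "-(u^2)"] by simp
  have "(cosh u)^2 * (1 - u^2) \<le> exp (u^2) * exp (-(u^2))"
    using a b True by (intro mult_mono) auto
  also have "\<dots> = 1" by (simp add: exp_minus)
  finally show ?thesis .
next
  case False
  hence "(cosh u)^2 * (1 - u^2) \<le> 0" by (intro mult_nonneg_nonpos) auto
  thus ?thesis by simp
qed

lemma D_bound: fixes u v :: real assumes "\<bar>v\<bar> \<le> 1"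
  shows "(cosh u)^2 - (sin v)^2 \<le> (cosh u)^2 * exp (-(v^2) + 7/20 * v^4 + v^2 * u^2)"
proof -
  have cpos: "cosh u > 0" by simp
  have "(sin v)^2 * (1 - u^2) * (cosh u)^2 \<le> (sin v)^2 * 1"
    using mult_left_mono[OF cosh_sq_bound[of u], of "(sin v)^2"] by (simp add: algebra_simps)
  hence w1: "(sin v)^2 / (cosh u)^2 \<ge> (sin v)^2 * (1 - u^2)"
    using cpos by (simp add: field_simps)
  have "(sin v)^2 * u^2 \<le> v^2 * u^2"
    using abs_sin_x_le_abs_x[of v] by (intro mult_right_mono) (auto simp: abs_le_square_iff)
  hence w2: "(sin v)^2 / (cosh u)^2 \<ge> v^2 - 7/20 * v^4 - v^2 * u^2"
    using w1 sin_sq_lower[OF assms] by (simp add: algebra_simps)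
  have "(cosh u)^2 - (sin v)^2 = (cosh u)^2 * (1 - (sin v)^2 / (cosh u)^2)"
    using cpos by (simp add: field_simps)
  also have "\<dots> \<le> (cosh u)^2 * exp (- ((sin v)^2 / (cosh u)^2))"
    using exp_ge_add_one_self[of "- ((sin v)^2 / (cosh u)^2)"] by (intro mult_left_mono) auto
  also have "\<dots> \<le> (cosh u)^2 * exp (-(v^2) + 7/20 * v^4 + v^2 * u^2)"
    using w2 by (intro mult_left_mono) auto
  finally show ?thesis .
qed


lemma t_facts:
  assumes "n \<ge> (1::nat)"
  shows "real n powr (-1/4) > 0" "(real n powr (-1/4))^2 * sqrt (real n) = 1"
        "(real n powr (-1/4))^4 * real n = 1" "real n * (real n powr (-1/4))^2 = sqrt (real n)"
proof -
  have n0: "real n > 0" using assms by simp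
  show "real n powr (-1/4) > 0" using n0 by simp
  have a: "(real n powr (-1/4))^2 = real n powr (-1/2)" using n0 by (simp add: powr_powr[symmetric] powr_realpow[symmetric] powr_powr)
  have b: "(real n powr (-1/4))^4 = real n powr (-1)" using n0 by (simp add: powr_realpow[symmetric] powr_powr)
  have s: "sqrt (real n) = real n powr (1/2)" using n0 by (simp add: powr_half_sqrt)
  show "(real n powr (-1/4))^2 * sqrt (real n) = 1" unfolding a s using n0 by (simp flip: powr_add)
  show "(real n powr (-1/4))^4 * real n = 1"
  proof -
    have "real n powr (-1) * real n = real n powr (-1) * real n powr 1" using n0 by simp
    also have "\<dots> = 1" using n0 by (subst powr_add[symmetric]) simp
    finally show ?thesis unfolding b .
  qed
  show "real n * (real n powr (-1/4))^2 = sqrt (real n)"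
  proof -
    have "real n * real n powr (-1/2) = real n powr 1 * real n powr (-1/2)" using n0 by simp
    also have "\<dots> = real n powr (1/2)" by (subst powr_add[symmetric]) simp
    finally show ?thesis unfolding a s .
  qed
qed

lemma q_bound:
  fixes s :: real assumes "s \<ge> 0"
  shows "(3 * exp s - 2) * exp (- 3 * s) \<le> exp (- ((s/(1+s))^2))"
proof -
  define y where "y = exp (-s)"
  have y0: "y > 0" and y1: "y \<le> 1" using assms by (auto simp: y_def)
  have es: "exp s = 1/y" by (simp add: y_def exp_minus field_simps)
  have e3: "exp (- 3 * s) = y^3" by (simp add: y_def exp_of_nat_mult[symmetric])
  have "(3 * exp s - 2) * exp (- 3 * s) = 1 - (1-y)^2 * (1 + 2*y)"
    unfolding es e3 using y0 by (simp add: field_simps power2_eq_square power3_eq_cube)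
  also have "\<dots> \<le> 1 - (1-y)^2"
  proof -
    have "(1-y)^2 * 1 \<le> (1-y)^2 * (1 + 2*y)" using y0 by (intro mult_left_mono) auto
    thus ?thesis by simp
  qed
  also have "\<dots> \<le> exp (-((1-y)^2))" using exp_ge_add_one_self[of "-((1-y)^2)"] by simp
  also have "\<dots> \<le> exp (- ((s/(1+s))^2))"
  proof -
    have "1 + s \<le> exp s" by (rule exp_ge_add_one_self)
    hence "y \<le> 1/(1+s)" using assms by (simp add: y_def exp_minus field_simps)
    hence "s/(1+s) \<le> 1 - y" using assms by (simp add: field_simps)
    moreover have "0 \<le> s/(1+s)" using assms by simp
    ultimately have "(s/(1+s))^2 \<le> (1-y)^2" by (intro power_mono) auto
    thus ?thesis by simp
  qed
  finally show ?thesis .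
qed

lemma psi_bound1:
  assumes n: "n \<ge> 1"
  shows "psi n x \<le> exp (-(x^4/36) / (1 + x^2 * (real n powr (-1/4))^2 / 6)^2)"
proof -
  define t where "t = real n powr (-1/4)"
  note tf = t_facts[OF n, folded t_def]
  define s where "s = (x*t)^2/6"
  have s0: "s \<ge> 0" by (simp add: s_def)
  have A1: "cosh (x*t) \<le> 3 * exp s - 2" unfolding s_def by (rule cosh_le_aux)
  have "psi n x = exp (- (sqrt (real n)) * x^2 / 2) * (cosh (x*t))^n" by (simp add: psi_def t_def)
  also have "exp (- (sqrt (real n)) * x^2 / 2) = exp (- 3 * s)^n"
  proof -
    have "- (sqrt (real n)) * x^2 / 2 = real n * (- 3 * s)"
      using tf(4) by (simp add: s_def power_mult_distrib algebra_simps flip: tf(4))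
    thus ?thesis by (simp add: exp_of_nat_mult[symmetric])
  qed
  also have "exp (- 3 * s)^n * (cosh (x*t))^n \<le> exp (- 3 * s)^n * (3 * exp s - 2)^n"
    by (intro mult_left_mono power_mono A1) auto
  also have "\<dots> = ((3 * exp s - 2) * exp (- 3 * s))^n" by (simp add: power_mult_distrib mult.commute)
  also have "\<dots> \<le> exp (- ((s/(1+s))^2))^n"
  proof (intro power_mono q_bound s0)
    have "3 * exp s - 2 \<ge> 1" using s0 exp_ge_add_one_self[of s] by linarith
    hence "0 \<le> 3 * exp s - 2" by linarith
    thus "0 \<le> (3 * exp s - 2) * exp (- 3 * s)" by (rule mult_nonneg_nonneg) simp
  qed
  also have "\<dots> = exp (real n * (- ((s/(1+s))^2)))" by (simp add: exp_of_nat_mult[symmetric])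
  also have "real n * (- ((s/(1+s))^2)) = -(x^4/36) / (1 + x^2 * t^2 / 6)^2"
  proof -
    have "real n * s^2 = x^4/36" using tf(3) by (simp add: s_def power_mult_distrib power2_eq_square[of "_/6"] algebra_simps flip: power_add)
    have "real n * (- ((s/(1+s))^2)) = -(real n * s^2) / (1+s)^2" by (simp add: power_divide)
    also have "\<dots> = -(x^4/36) / (1+s)^2" by (simp only: \<open>real n * s^2 = x^4/36\<close>)
    also have "\<dots> = -(x^4/36) / (1 + x^2 * t^2 / 6)^2" by (simp add: s_def power_mult_distrib)
    finally show ?thesis .
  qed
  finally show ?thesis by (simp add: t_def)
qed

lemma cosh_le_exp_abs: "cosh (u::real) \<le> exp \<bar>u\<bar>"
proof -
  have "exp u \<le> exp \<bar>u\<bar>" "exp (-u) \<le> exp \<bar>u\<bar>" by auto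
  hence "exp u + exp (-u) \<le> exp \<bar>u\<bar> + exp \<bar>u\<bar>" by (rule add_mono)
  thus ?thesis by (simp add: cosh_def)
qed

lemma psi_bound2:
  assumes n: "n \<ge> 1"
  shows "psi n x \<le> exp (- sqrt (real n) * x^2/2 + real n * real n powr (-1/4) * \<bar>x\<bar>)"
proof -
  define t where "t = real n powr (-1/4)"
  have t0: "t > 0" using t_facts[OF n] by (simp add: t_def)
  have "psi n x = exp (- (sqrt (real n)) * x^2 / 2) * (cosh (x*t))^n" by (simp add: psi_def t_def)
  also have "\<dots> \<le> exp (- (sqrt (real n)) * x^2 / 2) * exp \<bar>x*t\<bar> ^ n"
    by (intro mult_left_mono power_mono cosh_le_exp_abs) auto
  also have "\<dots> = exp (- sqrt (real n) * x^2/2) * exp (real n * t * \<bar>x\<bar>)"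
    using t0 by (simp add: exp_of_nat_mult[symmetric] abs_mult algebra_simps)
  also have "\<dots> = exp (- sqrt (real n) * x^2/2 + real n * t * \<bar>x\<bar>)" by (subst exp_add[symmetric]) simp
  finally show ?thesis by (simp add: t_def)
qed


lemma std_gauss_char:
  "has_bochner_integral lborel (\<lambda>x. std_normal_density x *\<^sub>R iexp (\<tau> * x)) (complex_of_real (exp (- (\<tau>^2) / 2)))"
proof -
  interpret real_distribution std_normal_distribution by (rule real_dist_normal_dist)
  have i1: "integrable std_normal_distribution (\<lambda>x. iexp (\<tau> * x))"
    by (rule integrable_iexp) auto
  have i2: "integrable lborel (\<lambda>x. std_normal_density x *\<^sub>R iexp (\<tau> * x))"
    using i1 by (subst (asm) integrable_density) auto
  have "char std_normal_distribution \<tau> = (CLINT x|lborel. std_normal_density x *\<^sub>R iexp (\<tau> * x))"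
    unfolding char_def by (subst integral_density) auto
  hence "(CLINT x|lborel. std_normal_density x *\<^sub>R iexp (\<tau> * x)) = complex_of_real (exp (- (\<tau>^2) / 2))"
    by (simp add: char_std_normal_distribution)
  with i2 show ?thesis by (simp add: has_bochner_integral_iff)
qed

lemma gauss_ft:
  fixes a :: real and w :: complex
  assumes a: "a > 0"
  shows "has_bochner_integral lborel (\<lambda>x::real. exp (-(of_real a * (of_real x)^2 / 2) + w * of_real x))
           (of_real (sqrt (2*pi/a)) * exp (w^2 / (2 * of_real a)))"
proof -
  define c where "c = Re w"
  define \<xi> where "\<xi> = Im w"
  define s where "s = sqrt a"
  have s0: "s > 0" using a by (simp add: s_def)
  have ss: "s^2 = a" using a by (simp add: s_def)
  define \<tau> where "\<tau> = \<xi> / s"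
  define t' where "t' = - c / s"
  define g where "g = (\<lambda>x. std_normal_density x *\<^sub>R iexp (\<tau> * x))"
  define K where "K = complex_of_real (sqrt (2*pi)) * exp (complex_of_real (c^2/(2*a)) + \<i> * complex_of_real (\<xi> * c / a))"
  have "has_bochner_integral lborel g (complex_of_real (exp (- (\<tau>^2) / 2)))"
    unfolding g_def by (rule std_gauss_char)
  hence "has_bochner_integral lborel (\<lambda>x. g (t' + s * x)) (complex_of_real (exp (- (\<tau>^2) / 2)) /\<^sub>R \<bar>s\<bar>)"
    using s0 by (subst (asm) lborel_has_bochner_integral_real_affine_iff[where c=s and t=t']) auto
  hence hb: "has_bochner_integral lborel (\<lambda>x. K * g (t' + s * x)) (K * (complex_of_real (exp (- (\<tau>^2) / 2)) /\<^sub>R \<bar>s\<bar>))"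
    by (rule has_bochner_integral_mult_right)
  have pw: "K * g (t' + s * x) = exp (-(of_real a * (of_real x)^2 / 2) + w * of_real x)" for x
  proof -
    define y where "y = t' + s * x"
    have "K * g y = exp (complex_of_real (c^2/(2*a)) + \<i> * complex_of_real (\<xi> * c / a)) *
                     (complex_of_real (exp (- (y^2)/2)) * exp (\<i> * complex_of_real (\<tau> * y)))"
      unfolding K_def g_def std_normal_density_def by (simp add: scaleR_conv_of_real)
    also have "\<dots> = exp (complex_of_real (c^2/(2*a)) + \<i> * complex_of_real (\<xi> * c / a)
                         + complex_of_real (- (y^2)/2) + \<i> * complex_of_real (\<tau> * y))"
      by (simp only: exp_add exp_of_real mult.assoc)
    also have "complex_of_real (c^2/(2*a)) + \<i> * complex_of_real (\<xi> * c / a)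
                         + complex_of_real (- (y^2)/2) + \<i> * complex_of_real (\<tau> * y)
               = -(of_real a * (of_real x)^2 / 2) + w * of_real x"
    proof (rule complex_eqI)
      have "c^2/(2*a) + - (y^2)/2 = -(a * x^2 / 2) + c * x"
        using s0 a unfolding y_def t'_def by (simp add: field_simps power2_eq_square ss[symmetric])
      thus "Re (complex_of_real (c^2/(2*a)) + \<i> * complex_of_real (\<xi> * c / a)
                         + complex_of_real (- (y^2)/2) + \<i> * complex_of_real (\<tau> * y))
            = Re (-(of_real a * (of_real x)^2 / 2) + w * of_real x)"
        by (simp add: c_def power2_eq_square)
      have "\<xi> * c / a + \<tau> * y = \<xi> * x"
        using s0 a unfolding y_def t'_def \<tau>_def by (simp add: field_simps power2_eq_square ss[symmetric])
      thus "Im (complex_of_real (c^2/(2*a)) + \<i> * complex_of_real (\<xi> * c / a)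
                         + complex_of_real (- (y^2)/2) + \<i> * complex_of_real (\<tau> * y))
            = Im (-(of_real a * (of_real x)^2 / 2) + w * of_real x)"
        by (simp add: \<xi>_def power2_eq_square)
    qed
    finally show ?thesis by (simp add: y_def)
  qed
  have val: "K * (complex_of_real (exp (- (\<tau>^2) / 2)) /\<^sub>R \<bar>s\<bar>) = of_real (sqrt (2*pi/a)) * exp (w^2 / (2 * of_real a))"
  proof -
    have "K * (complex_of_real (exp (- (\<tau>^2) / 2)) /\<^sub>R \<bar>s\<bar>)
        = complex_of_real (sqrt (2*pi) / s) * exp (complex_of_real (c^2/(2*a)) + \<i> * complex_of_real (\<xi> * c / a) + complex_of_real (- (\<tau>^2) / 2))"
    proof -
      define A where "A = complex_of_real (c^2/(2*a)) + \<i> * complex_of_real (\<xi> * c / a)"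
      have e1: "exp A * complex_of_real (exp (- (\<tau>^2) / 2)) = exp (A + complex_of_real (- (\<tau>^2) / 2))"
        by (simp only: exp_add exp_of_real)
      have "K * (complex_of_real (exp (- (\<tau>^2) / 2)) /\<^sub>R \<bar>s\<bar>)
            = complex_of_real (sqrt (2*pi)) * complex_of_real (1/s) * (exp A * complex_of_real (exp (- (\<tau>^2) / 2)))"
        using s0 unfolding K_def A_def[symmetric] by (simp add: scaleR_conv_of_real field_simps)
      also have "\<dots> = complex_of_real (sqrt (2*pi) / s) * exp (A + complex_of_real (- (\<tau>^2) / 2))"
        unfolding e1 by (simp add: of_real_mult[symmetric] del: of_real_mult)
      finally show ?thesis by (simp add: A_def)
    qed
    also have "sqrt (2*pi) / s = sqrt (2*pi/a)" using a by (simp add: s_def real_sqrt_divide)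
    also have "complex_of_real (c^2/(2*a)) + \<i> * complex_of_real (\<xi> * c / a) + complex_of_real (- (\<tau>^2) / 2)
               = w^2 / (2 * of_real a)"
    proof (rule complex_eqI)
      have "c^2/(2*a) + - (\<tau>^2) / 2 = (c^2 - \<xi>^2) / (2*a)"
        using s0 a unfolding \<tau>_def by (simp add: field_simps power2_eq_square ss[symmetric])
      thus "Re (complex_of_real (c^2/(2*a)) + \<i> * complex_of_real (\<xi> * c / a) + complex_of_real (- (\<tau>^2) / 2))
            = Re (w^2 / (2 * of_real a))"
        using a by (simp add: c_def \<xi>_def power2_eq_square Re_divide_of_real)
      show "Im (complex_of_real (c^2/(2*a)) + \<i> * complex_of_real (\<xi> * c / a) + complex_of_real (- (\<tau>^2) / 2))
            = Im (w^2 / (2 * of_real a))"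
        using a by (simp add: c_def \<xi>_def power2_eq_square Im_divide_of_real field_simps)
    qed
    finally show ?thesis .
  qed
  from hb show ?thesis unfolding pw val .
qed

lemma hb_to_hi:
  fixes f :: "real \<Rightarrow> complex"
  assumes "has_bochner_integral lborel f I"
  shows "(f has_integral I) UNIV"
  using has_integral_integral_lborel[of f] assms by (simp add: has_bochner_integral_iff)

lemma gauss_shift:
  fixes a \<beta> :: real and w :: complex
  assumes a: "a > 0"
  shows "((\<lambda>x::real. exp (-(of_real a * (of_real x + \<i> * of_real \<beta>)^2 / 2) + w * (of_real x + \<i> * of_real \<beta>)))
           has_integral (of_real (sqrt (2*pi/a)) * exp (w^2 / (2 * of_real a)))) UNIV"
proof -
  define w' where "w' = w - \<i> * of_real (a * \<beta>)"
  define M where "M = exp (of_real (a * \<beta>^2 / 2) + \<i> * of_real \<beta> * w)"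
  have hb: "has_bochner_integral lborel (\<lambda>x::real. M * exp (-(of_real a * (of_real x)^2 / 2) + w' * of_real x))
           (M * (of_real (sqrt (2*pi/a)) * exp (w'^2 / (2 * of_real a))))"
    by (rule has_bochner_integral_mult_right) (rule gauss_ft[OF a])
  have pw: "M * exp (-(of_real a * (of_real x)^2 / 2) + w' * of_real x)
          = exp (-(of_real a * (of_real x + \<i> * of_real \<beta>)^2 / 2) + w * (of_real x + \<i> * of_real \<beta>))" for x :: real
  proof -
    have "M * exp (-(of_real a * (of_real x)^2 / 2) + w' * of_real x)
        = exp (of_real (a * \<beta>^2 / 2) + \<i> * of_real \<beta> * w + (-(of_real a * (of_real x)^2 / 2) + w' * of_real x))"
      unfolding M_def by (simp only: exp_add)
    also have "of_real (a * \<beta>^2 / 2) + \<i> * of_real \<beta> * w + (-(of_real a * (of_real x)^2 / 2) + w' * of_real x)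
             = -(of_real a * (of_real x + \<i> * of_real \<beta>)^2 / 2) + w * (of_real x + \<i> * of_real \<beta>)"
      unfolding w'_def by (simp add: field_simps power2_eq_square)
    finally show ?thesis .
  qed
  have val: "M * (of_real (sqrt (2*pi/a)) * exp (w'^2 / (2 * of_real a))) = of_real (sqrt (2*pi/a)) * exp (w^2 / (2 * of_real a))"
  proof -
    have "M * (of_real (sqrt (2*pi/a)) * exp (w'^2 / (2 * of_real a)))
        = of_real (sqrt (2*pi/a)) * exp (of_real (a * \<beta>^2 / 2) + \<i> * of_real \<beta> * w + w'^2 / (2 * of_real a))"
      unfolding M_def by (simp add: exp_add)
    also have "of_real (a * \<beta>^2 / 2) + \<i> * of_real \<beta> * w + w'^2 / (2 * of_real a) = w^2 / (2 * of_real a)"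
      using a unfolding w'_def by (simp add: field_simps power2_eq_square)
    finally show ?thesis .
  qed
  show ?thesis using hb_to_hi[OF hb] unfolding pw val .
qed


definition Cb :: "real \<Rightarrow> real" where "Cb b = exp (126 * ((b^2+1)/2)^2) + 1"

lemma dom_bound:
  fixes b x :: real
  assumes n: "n \<ge> 1" and nb: "sqrt (real n) \<ge> 2*b^2 + 2"
  shows "exp (b^2*x^2/2) * psi n x \<le> Cb b * exp (-(x^2)/2)"
proof -
  define t where "t = real n powr (-1/4)"
  note tf = t_facts[OF n, folded t_def]
  have t0: "t > 0" using tf(1) .
  show ?thesis
  proof (cases "\<bar>x\<bar> * t \<le> 4")
    case True
    define c where "c = (b^2+1)/2"
    have xt: "x^2 * t^2 \<le> 16"
    proof -
      have "(\<bar>x\<bar>*t)^2 \<le> 4^2" using True t0 by (intro power_mono) auto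
      thus ?thesis by (simp add: power_mult_distrib)
    qed
    define D where "D = (1 + x^2 * t^2 / 6)^2"
    have D1: "D \<ge> 1" unfolding D_def by (rule one_le_power) simp
    have D14: "D \<le> 14"
    proof -
      have "1 + x^2 * t^2 / 6 \<le> 11/3" using xt by linarith
      hence "D \<le> (11/3)^2" unfolding D_def by (intro power_mono) auto
      moreover have "(11/3::real)^2 \<le> 14" by (simp add: power2_eq_square)
      ultimately show ?thesis by linarith
    qed
    have "psi n x \<le> exp (-(x^4/36) / D)" using psi_bound1[OF n, of x] by (simp add: D_def t_def)
    also have "\<dots> \<le> exp (-(x^4/504))"
    proof -
      have x4: "x^4 \<ge> 0" by simp
      have "(x^4/36)/14 \<le> (x^4/36)/D" using D1 D14 x4 by (intro divide_left_mono) auto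
      thus ?thesis by simp
    qed
    finally have p: "psi n x \<le> exp (-(x^4/504))" .
    have "exp (b^2*x^2/2) * psi n x \<le> exp (b^2*x^2/2) * exp (-(x^4/504))"
      using p by (intro mult_left_mono) auto
    also have "\<dots> = exp (b^2*x^2/2 - x^4/504)" by (simp add: exp_add[symmetric] algebra_simps)
    also have "\<dots> \<le> exp (126 * c^2 - x^2/2)"
    proof -
      have "0 \<le> (x^2 - 252*c)^2" by simp
      hence "c * x^2 - x^4/504 \<le> 126 * c^2" by (simp add: power2_eq_square algebra_simps power4_eq_xxxx)
      thus ?thesis by (simp add: c_def algebra_simps)
    qed
    also have "\<dots> = exp (126 * c^2) * exp (-(x^2)/2)" by (simp add: exp_add[symmetric] algebra_simps)
    also have "\<dots> \<le> Cb b * exp (-(x^2)/2)" by (simp add: Cb_def c_def)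
    finally show ?thesis .
  next
    case False
    have "real n * t * \<bar>x\<bar> * 4 \<le> real n * t * \<bar>x\<bar> * (\<bar>x\<bar> * t)"
      using False t0 by (intro mult_left_mono) auto
    also have "\<dots> = (real n * t^2) * x^2" by (simp add: power2_eq_square algebra_simps)
    also have "\<dots> = sqrt (real n) * x^2" using tf(4) by simp
    finally have a: "real n * t * \<bar>x\<bar> \<le> sqrt (real n) * x^2 / 4" by simp
    have "psi n x \<le> exp (- sqrt (real n) * x^2/2 + real n * t * \<bar>x\<bar>)"
      using psi_bound2[OF n, of x] by (simp add: t_def)
    also have "\<dots> \<le> exp (- sqrt (real n) * x^2/4)" using a by simp
    finally have p: "psi n x \<le> exp (- sqrt (real n) * x^2/4)" .
    have "exp (b^2*x^2/2) * psi n x \<le> exp (b^2*x^2/2) * exp (- sqrt (real n) * x^2/4)"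
      using p by (intro mult_left_mono) auto
    also have "\<dots> = exp (b^2*x^2/2 - sqrt (real n) * x^2/4)" by (simp add: exp_add[symmetric] algebra_simps)
    also have "\<dots> \<le> exp (-(x^2)/2)"
    proof -
      have "(2*b^2+2) * x^2 \<le> sqrt (real n) * x^2" using nb by (intro mult_right_mono) auto
      thus ?thesis by (simp add: algebra_simps)
    qed
    also have "\<dots> \<le> Cb b * exp (-(x^2)/2)"
    proof -
      have "1 \<le> Cb b" by (simp add: Cb_def)
      from mult_right_mono[OF this, of "exp (-(x^2)/2)"] show ?thesis by simp
    qed
    finally show ?thesis .
  qed
qed

lemma h_lim: "((\<lambda>w::real. (ln (cosh w) - w^2/2)/w^4) \<longlongrightarrow> -1/12) (at_right 0)"
  by real_asymp

lemma w_lim: "c > 0 \<Longrightarrow> filterlim (\<lambda>n. (c::real) * real n powr (-1/4)) (at_right 0) at_top"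
  by real_asymp

lemma psi_lim: "(\<lambda>n. psi n x) \<longlonglongrightarrow> exp (-(x^4)/12)"
proof (cases "x = 0")
  case True
  thus ?thesis by (simp add: psi_def)
next
  case False
  define h where "h = (\<lambda>w::real. (ln (cosh w) - w^2/2)/w^4)"
  have ax: "\<bar>x\<bar> > 0" using False by simp
  have "((\<lambda>n. h (\<bar>x\<bar> * real n powr (-1/4))) \<longlongrightarrow> -1/12) at_top"
    using filterlim_compose[OF h_lim[folded h_def] w_lim[OF ax]] .
  hence "((\<lambda>n. exp (x^4 * h (\<bar>x\<bar> * real n powr (-1/4)))) \<longlongrightarrow> exp (x^4 * (-1/12))) at_top"
    by (intro tendsto_intros)
  moreover have "eventually (\<lambda>n. exp (x^4 * h (\<bar>x\<bar> * real n powr (-1/4))) = psi n x) at_top"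
    using eventually_ge_at_top[of "1::nat"]
  proof eventually_elim
    case (elim n)
    define t where "t = real n powr (-1/4)"
    note tf = t_facts[OF elim, folded t_def]
    have t0: "t > 0" using tf(1) .
    have habs: "\<bar>x\<bar> * t = \<bar>x*t\<bar>" using t0 by (simp add: abs_mult)
    have "x^4 * h (\<bar>x\<bar> * t) = x^4 * (ln (cosh (x*t)) - (x*t)^2/2) / (x*t)^4"
      unfolding habs h_def by (simp add: power_even_abs_numeral)
    also have "\<dots> = x^4 * (ln (cosh (x*t)) - (x*t)^2/2) / (x^4 * t^4)"
      by (simp add: power_mult_distrib)
    also have "\<dots> = (ln (cosh (x*t)) - (x*t)^2/2) / t^4" using False by simp
    also have "\<dots> = real n * ln (cosh (x*t)) - sqrt (real n) * x^2 / 2"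
    proof -
      have tn: "1 / t^4 = real n" using tf(3) t0 by (simp add: field_simps)
      have "(ln (cosh (x*t)) - (x*t)^2/2) / t^4 = (1/t^4) * ln (cosh (x*t)) - (1/t^4) * t^2 * x^2/2"
        using t0 by (simp add: power_mult_distrib field_simps)
      also have "\<dots> = real n * ln (cosh (x*t)) - (real n * t^2) * x^2/2" by (simp add: tn)
      also have "\<dots> = real n * ln (cosh (x*t)) - sqrt (real n) * x^2 / 2" using tf(4) by simp
      finally show ?thesis .
    qed
    finally have e: "x^4 * h (\<bar>x\<bar> * t) = real n * ln (cosh (x*t)) - sqrt (real n) * x^2 / 2" .
    have "exp (x^4 * h (\<bar>x\<bar> * t)) = exp (- sqrt (real n) * x^2 / 2) * exp (real n * ln (cosh (x*t)))"
      unfolding e by (simp add: exp_add[symmetric] algebra_simps)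
    also have "exp (real n * ln (cosh (x*t))) = cosh (x*t) ^ n"
      by (subst exp_of_nat_mult) simp
    finally show ?case by (simp add: psi_def t_def mult.commute)
  qed
  ultimately have "((\<lambda>n. psi n x) \<longlongrightarrow> exp (x^4 * (-1/12))) at_top"
    by (rule Lim_transform_eventually)
  thus ?thesis by simp
qed


lemma norm_ccosh_sq:
  fixes q :: complex
  shows "(cmod ((exp q + exp (-q))/2))^2 = cosh (Re q)^2 - sin (Im q)^2"
proof -
  define p where "p = Re q"
  define \<theta> where "\<theta> = Im q"
  have re: "Re ((exp q + exp (-q))/2) = cosh p * cos \<theta>"
    by (simp add: p_def \<theta>_def Re_exp cosh_def field_simps)
  have im: "Im ((exp q + exp (-q))/2) = sinh p * sin \<theta>"
    by (simp add: p_def \<theta>_def Im_exp sinh_def field_simps)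
  have "(cmod ((exp q + exp (-q))/2))^2 = (cosh p * cos \<theta>)^2 + (sinh p * sin \<theta>)^2"
    unfolding cmod_power2 re im ..
  also have "\<dots> = cosh p ^2 - sin \<theta>^2"
  proof -
    have h1: "cos \<theta>^2 = 1 - sin \<theta>^2" by (simp add: cos_squared_eq)
    have h2: "sinh p^2 = cosh p^2 - 1" by (simp add: cosh_square_eq)
    have "(cosh p * cos \<theta>)^2 + (sinh p * sin \<theta>)^2 = cosh p^2 * cos \<theta>^2 + sinh p^2 * sin \<theta>^2"
      by (simp add: power_mult_distrib)
    also have "\<dots> = cosh p^2 * (1 - sin \<theta>^2) + (cosh p^2 - 1) * sin \<theta>^2" by (simp only: h1 h2)
    also have "\<dots> = cosh p ^2 - sin \<theta>^2" by (simp add: algebra_simps)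
    finally show ?thesis .
  qed
  finally show ?thesis by (simp add: p_def \<theta>_def)
qed

definition Phi :: "nat \<Rightarrow> real \<Rightarrow> complex \<Rightarrow> complex" where
  "Phi n \<xi> z = exp (-(of_real (sqrt (real n)) * z^2 / 2)) *
     ((exp (of_real (real n powr (-1/4)) * z) + exp (-(of_real (real n powr (-1/4)) * z))) / 2) ^ n *
     exp (\<i> * of_real \<xi> * z)"

lemma Phi_norm:
  fixes b \<beta> x \<xi> :: real
  assumes n: "n \<ge> 1" and bb: "\<bar>\<beta>\<bar> = b" and bt: "b * real n powr (-1/4) \<le> 1"
  shows "norm (Phi n \<xi> (of_real x + \<i> * of_real \<beta>)) \<le> exp (-(\<xi>*\<beta>)) * (exp (7*b^4/40) * (exp (b^2*x^2/2) * psi n x))"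
proof -
  define t where "t = real n powr (-1/4)"
  note tf = t_facts[OF n, folded t_def]
  have t0: "t > 0" using tf(1) .
  define a where "a = sqrt (real n)"
  define z where "z = complex_of_real x + \<i> * of_real \<beta>"
  define q where "q = of_real t * z"
  have req: "Re q = t * x" and imq: "Im q = t * \<beta>" by (simp_all add: q_def z_def)
  define E where "E = -((t*\<beta>)^2) + 7/20 * (t*\<beta>)^4 + (t*\<beta>)^2 * (t*x)^2"
  have tb1: "\<bar>t*\<beta>\<bar> \<le> 1" using bt t0 bb by (simp add: t_def abs_mult mult.commute)
  have n1: "norm (exp (-(of_real a * z^2 / 2))) = exp (-(a * (x^2 - \<beta>^2))/2)"
    by (simp add: norm_exp_eq_Re z_def power2_eq_square field_simps)
  have n3: "norm (exp (\<i> * of_real \<xi> * z)) = exp (-(\<xi>*\<beta>))"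
    by (simp add: norm_exp_eq_Re z_def)
  have c2: "(norm ((exp q + exp (-q))/2))^2 \<le> (cosh (t*x) * exp (E/2))^2"
  proof -
    have "(norm ((exp q + exp (-q))/2))^2 = cosh (t*x)^2 - sin (t*\<beta>)^2"
      using norm_ccosh_sq[of q] by (simp add: req imq)
    also have "\<dots> \<le> cosh (t*x)^2 * exp E" unfolding E_def by (rule D_bound[OF tb1])
    also have "\<dots> = (cosh (t*x) * exp (E/2))^2"
      by (simp add: power_mult_distrib power2_eq_square exp_add[symmetric])
    finally show ?thesis .
  qed
  have c1: "norm ((exp q + exp (-q))/2) \<le> cosh (t*x) * exp (E/2)"
    using c2 by (rule power2_le_imp_le) simp
  have c3: "norm (((exp q + exp (-q))/2) ^ n) \<le> cosh (t*x) ^ n * exp (real n * E/2)"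
  proof -
    have "norm (((exp q + exp (-q))/2) ^ n) = norm ((exp q + exp (-q))/2) ^ n" by (rule norm_power)
    also have "\<dots> \<le> (cosh (t*x) * exp (E/2)) ^ n" by (intro power_mono c1) simp
    also have "\<dots> = cosh (t*x) ^ n * exp (real n * E/2)"
      by (simp add: power_mult_distrib exp_of_nat_mult[symmetric])
    finally show ?thesis .
  qed
  have nE: "real n * E/2 = (-(a * b^2) + 7/20 * b^4 + b^2 * x^2)/2"
  proof -
    have b2: "\<beta>^2 = b^2" using bb by (metis power2_abs)
    have b4: "\<beta>^4 = b^4" using bb by (metis power_even_abs_numeral even_numeral)
    have "real n * E = -((real n * t^2) * \<beta>^2) + 7/20 * ((t^4 * real n) * \<beta>^4) + (t^4 * real n) * \<beta>^2 * x^2"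
      unfolding E_def by (simp add: power_mult_distrib algebra_simps power2_eq_square power4_eq_xxxx)
    also have "\<dots> = -(a * b^2) + 7/20 * b^4 + b^2 * x^2" unfolding tf(3) tf(4) b2 b4 a_def by simp
    finally show ?thesis by simp
  qed
  have "Phi n \<xi> z = exp (-(of_real a * z^2 / 2)) * ((exp q + exp (-q))/2) ^ n * exp (\<i> * of_real \<xi> * z)"
    by (simp add: Phi_def a_def q_def t_def)
  hence "norm (Phi n \<xi> z) = norm (exp (-(of_real a * z^2 / 2))) * norm (((exp q + exp (-q))/2) ^ n) * norm (exp (\<i> * of_real \<xi> * z))"
    by (simp only: norm_mult)
  also have "\<dots> = exp (-(a * (x^2 - \<beta>^2))/2) * norm (((exp q + exp (-q))/2) ^ n) * exp (-(\<xi>*\<beta>))"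
    unfolding n1 n3 ..
  also have "\<dots> \<le> exp (-(a * (x^2 - \<beta>^2))/2) * (cosh (t*x) ^ n * exp (real n * E/2)) * exp (-(\<xi>*\<beta>))"
    by (intro mult_right_mono mult_left_mono c3) auto
  also have "\<dots> = exp (-(\<xi>*\<beta>)) * (exp (7*b^4/40) * (exp (b^2*x^2/2) * psi n x))"
  proof -
    have b2: "\<beta>^2 = b^2" using bb by (metis power2_abs)
    have "exp (-(a * (x^2 - \<beta>^2))/2) * exp (real n * E/2) = exp (- a * x^2 / 2) * (exp (7*b^4/40) * exp (b^2*x^2/2))"
      unfolding nE b2 by (simp add: exp_add[symmetric] field_simps)
    thus ?thesis by (simp add: psi_def a_def t_def mult.commute mult.left_commute)
  qed
  finally show ?thesis by (simp add: z_def)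
qed

lemma Phi_expand:
  "Phi n \<xi> z = (\<Sum>k\<le>n. of_real (real (n choose k) / 2^n) *
       exp (-(of_real (sqrt (real n)) * z^2 / 2) + (of_real (real n powr (-1/4) * (2 * real k - real n)) + \<i> * of_real \<xi>) * z))"
proof -
  define t where "t = real n powr (-1/4)"
  define a where "a = sqrt (real n)"
  define q where "q = of_real t * z"
  have pk: "exp q ^ k * exp (-q) ^ (n-k) = exp (of_real (2 * real k - real n) * q)" if "k \<le> n" for k
  proof -
    have "exp q ^ k * exp (-q) ^ (n-k) = exp (of_nat k * q) * exp (of_nat (n-k) * (-q))"
      by (simp only: exp_of_nat_mult)
    also have "\<dots> = exp (of_nat k * q + of_nat (n-k) * (-q))" by (simp only: exp_add)
    also have "of_nat k * q + of_nat (n-k) * (-q) = of_real (2 * real k - real n) * q"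
      using that by (simp add: of_nat_diff algebra_simps)
    finally show ?thesis .
  qed
  have bin: "((exp q + exp (-q))/2)^n = (\<Sum>k\<le>n. of_real (real (n choose k) / 2^n) * exp (of_real (2 * real k - real n) * q))"
  proof -
    have "((exp q + exp (-q))/2)^n = (exp q + exp (-q))^n / 2^n" by (simp add: power_divide)
    also have "(exp q + exp (-q))^n = (\<Sum>k\<le>n. of_nat (n choose k) * exp q ^ k * exp (-q) ^ (n-k))"
      by (rule binomial_ring)
    also have "\<dots> = (\<Sum>k\<le>n. of_nat (n choose k) * exp (of_real (2 * real k - real n) * q))"
      by (intro sum.cong refl) (simp add: pk mult.assoc)
    also have "(\<Sum>k\<le>n. of_nat (n choose k) * exp (of_real (2 * real k - real n) * q)) / 2^n
             = (\<Sum>k\<le>n. of_real (real (n choose k) / 2^n) * exp (of_real (2 * real k - real n) * q))"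
      by (simp add: sum_divide_distrib)
    finally show ?thesis .
  qed
  have "Phi n \<xi> z = exp (-(of_real a * z^2 / 2)) * ((exp q + exp (-q))/2) ^ n * exp (\<i> * of_real \<xi> * z)"
    by (simp add: Phi_def a_def q_def t_def)
  also have "\<dots> = (\<Sum>k\<le>n. of_real (real (n choose k) / 2^n) *
       (exp (-(of_real a * z^2 / 2)) * exp (of_real (2 * real k - real n) * q) * exp (\<i> * of_real \<xi> * z)))"
    unfolding bin by (simp add: sum_distrib_left sum_distrib_right mult_ac)
  also have "\<dots> = (\<Sum>k\<le>n. of_real (real (n choose k) / 2^n) *
       exp (-(of_real a * z^2 / 2) + (of_real (t * (2 * real k - real n)) + \<i> * of_real \<xi>) * z))"
  proof (intro sum.cong refl arg_cong2[where f="(*)"])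
    fix k
    show "exp (-(of_real a * z^2 / 2)) * exp (of_real (2 * real k - real n) * q) * exp (\<i> * of_real \<xi> * z)
       = exp (-(of_real a * z^2 / 2) + (of_real (t * (2 * real k - real n)) + \<i> * of_real \<xi>) * z)"
      by (simp add: exp_add[symmetric] q_def algebra_simps)
  qed
  finally show ?thesis by (simp add: a_def t_def)
qed

lemma Phi_real: "Phi n \<xi> (of_real x) = of_real (psi n x) * cis (\<xi> * x)"
proof -
  define t where "t = real n powr (-1/4)"
  have c: "(exp (of_real t * of_real x) + exp (-(of_real t * of_real x))) / 2 = (complex_of_real (cosh (x*t)))"
    by (simp add: cosh_def exp_of_real[symmetric] mult.commute)
  have e1: "exp (-(of_real (sqrt (real n)) * (complex_of_real x)^2 / 2)) = of_real (exp (- (sqrt (real n)) * x^2 / 2))"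
    by (simp flip: exp_of_real)
  show ?thesis
    unfolding Phi_def t_def[symmetric] c e1
    by (simp add: psi_def t_def cis_conv_exp mult.commute mult.left_commute)
qed

definition Sfun :: "nat \<Rightarrow> real \<Rightarrow> complex" where
  "Sfun n \<xi> = (\<Sum>k\<le>n. of_real (real (n choose k) / 2^n) *
       (of_real (sqrt (2*pi/sqrt (real n))) *
        exp ((of_real (real n powr (-1/4) * (2 * real k - real n)) + \<i> * of_real \<xi>)^2 / (2 * of_real (sqrt (real n))))))"

lemma Phi_shift_integral:
  assumes n: "n \<ge> 1"
  shows "((\<lambda>x. Phi n \<xi> (of_real x + \<i> * of_real \<beta>)) has_integral Sfun n \<xi>) UNIV"
proof -
  have a: "sqrt (real n) > 0" using n by simp
  show ?thesis
    unfolding Phi_expand Sfun_def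
    by (intro has_integral_sum finite_atMost has_integral_mult_right gauss_shift[OF a])
qed

lemma psi_hat_eq:
  assumes n: "n \<ge> 1"
  shows "psi_hat n \<xi> = Sfun n \<xi>"
proof -
  have "((\<lambda>x. Phi n \<xi> (of_real x + \<i> * of_real 0)) has_integral Sfun n \<xi>) UNIV"
    by (rule Phi_shift_integral[OF n])
  hence "((\<lambda>x. complex_of_real (psi n x) * cis (\<xi> * x)) has_integral Sfun n \<xi>) UNIV"
    by (simp add: Phi_real)
  thus ?thesis unfolding psi_hat_def by (rule integral_unique)
qed

lemma psi_hat_bound:
  fixes b \<xi> :: real
  assumes n: "n \<ge> 1" and b0: "b \<ge> 0" and bt: "b * real n powr (-1/4) \<le> 1"
    and int: "(\<lambda>x. exp (b^2*x^2/2) * psi n x) integrable_on UNIV"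
  shows "cmod (psi_hat n \<xi>) \<le> exp (- b * \<bar>\<xi>\<bar>) * (exp (7*b^4/40) * integral UNIV (\<lambda>x. exp (b^2*x^2/2) * psi n x))"
proof -
  define \<beta> where "\<beta> = (if \<xi> \<ge> 0 then b else -b)"
  have bb: "\<bar>\<beta>\<bar> = b" using b0 by (simp add: \<beta>_def)
  have xb: "\<xi> * \<beta> = b * \<bar>\<xi>\<bar>" by (simp add: \<beta>_def)
  have hi: "((\<lambda>x. Phi n \<xi> (of_real x + \<i> * of_real \<beta>)) has_integral Sfun n \<xi>) UNIV"
    by (rule Phi_shift_integral[OF n])
  define g where "g = (\<lambda>x. exp (-(\<xi>*\<beta>)) * (exp (7*b^4/40) * (exp (b^2*x^2/2) * psi n x)))"
  have gi: "g integrable_on UNIV" unfolding g_def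
    by (intro integrable_on_mult_right int)
  have "cmod (Sfun n \<xi>) = cmod (integral UNIV (\<lambda>x. Phi n \<xi> (of_real x + \<i> * of_real \<beta>)))"
    using hi by (simp add: integral_unique)
  also have "\<dots> \<le> integral UNIV g"
    using hi gi by (intro integral_norm_bound_integral) (auto simp: g_def intro!: Phi_norm[OF n bb bt])
  also have "integral UNIV g = exp (-(\<xi>*\<beta>)) * (exp (7*b^4/40) * integral UNIV (\<lambda>x. exp (b^2*x^2/2) * psi n x))"
    unfolding g_def by (simp add: integral_mult_right)
  finally show ?thesis using psi_hat_eq[OF n] by (simp add: xb)
qed


lemma gauss_lborel: "integrable lborel (\<lambda>x::real. exp (-(x^2)/2))"
proof -
  have "integrable lborel (\<lambda>x. sqrt (2*pi) * std_normal_density x)"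
    by (intro integrable_mult_right) simp
  moreover have "(\<lambda>x. sqrt (2*pi) * std_normal_density x) = (\<lambda>x::real. exp (-(x^2)/2))"
    by (simp add: std_normal_density_def fun_eq_iff)
  ultimately show ?thesis by simp
qed

lemma gauss_int: "(\<lambda>x::real. exp (-(x^2)/2)) integrable_on UNIV"
  using integrable_on_lborel[OF gauss_lborel] .

lemma f12_lborel: "integrable lborel (\<lambda>x::real. exp (-(x^4)/12))"
proof (rule Bochner_Integration.integrable_bound)
  show "integrable lborel (\<lambda>x::real. exp (3/4) * exp (-(x^2)/2))"
    by (intro integrable_mult_right gauss_lborel)
  show "(\<lambda>x::real. exp (-(x^4)/12)) \<in> borel_measurable lborel" by measurable
  have bound: "norm (exp (-(x^4)/12)) \<le> norm (exp (3/4) * exp (-(x^2)/2))" for x :: real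
  proof -
    have "0 \<le> (x^2 - 3)^2" by simp
    hence "-(x^4)/12 \<le> 3/4 + -(x^2)/2" by (simp add: power2_eq_square power4_eq_xxxx algebra_simps)
    hence "exp (-(x^4)/12) \<le> exp (3/4 + -(x^2)/2)" by simp
    thus "norm (exp (-(x^4)/12)) \<le> norm (exp (3/4) * exp (-(x^2)/2))" by (simp add: exp_add[symmetric])
  qed
  show "AE x in lborel. norm (exp (-((x::real)^4)/12)) \<le> norm (exp (3/4) * exp (-(x^2)/2))"
    by (rule AE_I2) (rule bound)
qed

lemma I_inf_lborel: "I_inf = (\<integral>x. exp (-(x^4)/12) \<partial>lborel)"
  unfolding I_inf_def using integral_lborel[OF f12_lborel] by simp

lemma c4_lemma: "(2 powr (-1/4::real))^4 = 1/2"
proof -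
  have "(2 powr (-1/4::real))^4 = (2 powr (-1/4::real)) powr (real 4)"
    by (subst powr_realpow) auto
  also have "\<dots> = 2 powr (-1)" by (simp add: powr_powr)
  also have "\<dots> = 1/2" by (simp add: powr_minus_divide)
  finally show ?thesis .
qed

lemma f24_eq: "(\<lambda>x. exp (-((0 + 2 powr (-1/4) * x)^4)/12)) = (\<lambda>x::real. exp (-(x^4)/24))"
proof
  fix x :: real
  have "(0 + 2 powr (-1/4) * x)^4 = (2 powr (-1/4::real))^4 * x^4" by (simp only: add_0_left power_mult_distrib)
  also have "\<dots> = x^4 / 2" unfolding c4_lemma by simp
  finally have "(0 + 2 powr (-1/4) * x)^4 = x^4 / 2" .
  thus "exp (-((0 + 2 powr (-1/4) * x)^4)/12) = exp (-(x^4)/24)" by simp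
qed

lemma f24_lborel: "integrable lborel (\<lambda>x::real. exp (-(x^4)/24))"
proof -
  have "integrable lborel (\<lambda>x::real. exp (-((0 + 2 powr (-1/4) * x)^4)/12))"
    by (intro lborel_integrable_real_affine f12_lborel) simp
  thus ?thesis unfolding f24_eq .
qed

lemma f24_integral: "(\<integral>x. exp (-(x^4)/24) \<partial>lborel) = 2 powr (1/4) * I_inf"
proof -
  define c :: real where "c = 2 powr (-1/4)"
  define J :: real where "J = (\<integral>x. exp (-(x^4)/24) \<partial>lborel)"
  have c0: "c > 0" by (simp add: c_def)
  have "(\<integral>x. exp (-(x^4)/12) \<partial>lborel) = \<bar>c\<bar> *\<^sub>R (\<integral>x. exp (-((0 + c * x)^4)/12) \<partial>lborel)"
    using c0 by (intro lborel_integral_real_affine) auto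
  hence I: "I_inf = c * J" unfolding J_def I_inf_lborel c_def f24_eq using c0 by (simp add: c_def)
  have c1: "c * 2 powr (1/4) = 1" unfolding c_def by (subst powr_add[symmetric]) simp
  have "J = (c * 2 powr (1/4)) * J" using c1 by simp
  also have "\<dots> = 2 powr (1/4) * (c * J)" by (simp only: mult_ac)
  finally show ?thesis unfolding J_def I by simp
qed

lemma I_inf_pos: "I_inf > 0"
proof -
  have f12i: "(\<lambda>x::real. exp (-(x^4)/12)) integrable_on UNIV" by (rule integrable_on_lborel[OF f12_lborel])
  have "((\<lambda>x::real. exp (-1/12::real)) has_integral exp (-1/12::real)) {0..1}"
    using has_integral_const_real[of "exp (-1/12::real)" 0 "1::real"] by simp
  hence hi: "((\<lambda>x::real. if x \<in> {0..1} then exp (-1/12::real) else 0) has_integral exp (-1/12::real)) UNIV"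
    by (subst has_integral_restrict_UNIV)
  have "exp (-1/12::real) \<le> I_inf"
    unfolding I_inf_def
  proof (rule has_integral_le[OF hi integrable_integral[OF f12i]])
    fix x :: real
    show "(if x \<in> {0..1} then exp (-1/12::real) else 0) \<le> exp (-(x^4)/12)"
    proof (cases "x \<in> {0..1}")
      case True
      hence "x^4 \<le> 1" by (intro power_le_one) (auto simp: atLeastAtMost_iff)
      thus ?thesis using True by simp
    qed auto
  qed
  moreover have "exp (-1/12::real) > 0" by simp
  ultimately show ?thesis by linarith
qed


lemma psi_nonneg: "psi n x \<ge> 0"
  by (simp add: psi_def)

lemma wpsi_cont: "continuous_on UNIV (\<lambda>x. exp (b^2*x^2/2) * psi n x)"
  unfolding psi_def by (intro continuous_intros) auto

lemma wpsi_int: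
  fixes b :: real
  assumes n: "n \<ge> 1" and nb: "sqrt (real n) \<ge> 2*b^2 + 2"
  shows "(\<lambda>x. exp (b^2*x^2/2) * psi n x) integrable_on UNIV"
proof (rule integrable_on_all_intervals_integrable_bound[where g="\<lambda>x. Cb b * exp (-(x^2)/2)"])
  show "(\<lambda>x. if x \<in> UNIV then exp (b^2*x^2/2) * psi n x else 0) integrable_on cbox l u" for l u
    using continuous_on_subset[OF wpsi_cont[of b n]] by (auto intro!: integrable_continuous_real)
  show "norm (exp (b^2*x^2/2) * psi n x) \<le> Cb b * exp (-(x^2)/2)" for x
    using dom_bound[OF n nb, of x] psi_nonneg[of n x] by simp
  show "(\<lambda>x. Cb b * exp (-(x^2)/2)) integrable_on UNIV"
    by (intro integrable_on_mult_right gauss_int)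
qed

lemma limit_bound:
  fixes b :: real
  assumes b0: "b \<ge> 0" and Gi: "(\<lambda>x. exp (b^2*x^2/2) * exp (-(x^4)/12)) integrable_on UNIV"
  shows "exp (7*b^4/40) * integral UNIV (\<lambda>x. exp (b^2*x^2/2) * exp (-(x^4)/12)) \<le> K b"
proof -
  define R where "R = 2 * sqrt 3 * b"
  have R0: "R \<ge> 0" using b0 by (simp add: R_def)
  have R2: "R^2 = 12 * b^2" by (simp add: R_def power_mult_distrib)
  define H where "H = (\<lambda>x::real. (if x \<in> {-R..R} then exp (37*b^4/40) else 0) + exp (7*b^4/40) * exp (-(x^4)/24))"
  have h1: "((\<lambda>x::real. exp (37*b^4/40)) has_integral (2*R) * exp (37*b^4/40)) {-R..R}"
    using has_integral_const_real[of "exp (37*b^4/40)" "-R" R] R0 by simp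
  have h1': "((\<lambda>x::real. if x \<in> {-R..R} then exp (37*b^4/40) else 0) has_integral (2*R) * exp (37*b^4/40)) UNIV"
    using h1 by (subst has_integral_restrict_UNIV)
  have h2: "((\<lambda>x::real. exp (-(x^4)/24)) has_integral 2 powr (1/4) * I_inf) UNIV"
    using has_integral_integral_lborel[OF f24_lborel] unfolding f24_integral .
  have hH: "(H has_integral ((2*R) * exp (37*b^4/40) + exp (7*b^4/40) * (2 powr (1/4) * I_inf))) UNIV"
    unfolding H_def by (intro has_integral_add h1' has_integral_mult_right h2)
  have le: "exp (7*b^4/40) * (exp (b^2*x^2/2) * exp (-(x^4)/12)) \<le> H x" for x
  proof (cases "x \<in> {-R..R}")
    case True
    have "\<bar>x\<bar> \<le> R" using True by auto
    have "0 \<le> (x^2 - 3*b^2)^2" by simp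
    hence "b^2*x^2/2 - x^4/12 \<le> 3*b^4/4" by (simp add: power2_eq_square power4_eq_xxxx algebra_simps)
    hence "7*b^4/40 + (b^2*x^2/2 + -(x^4)/12) \<le> 37*b^4/40" by simp
    hence e: "exp (7*b^4/40 + (b^2*x^2/2 + -(x^4)/12)) \<le> exp (37*b^4/40)" by (simp only: exp_le_cancel_iff)
    have eq: "exp (7*b^4/40 + (b^2*x^2/2 + -(x^4)/12)) = exp (7*b^4/40) * (exp (b^2*x^2/2) * exp (-(x^4)/12))"
      by (simp only: exp_add)
    from e have a1: "exp (7*b^4/40) * (exp (b^2*x^2/2) * exp (-(x^4)/12)) \<le> exp (37*b^4/40)"
      unfolding eq .
    have a2: "0 \<le> exp (7*b^4/40) * exp (-(x^4)/24)" by simp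
    have "H x = exp (37*b^4/40) + exp (7*b^4/40) * exp (-(x^4)/24)" using True by (simp add: H_def)
    thus ?thesis using a1 a2 by linarith
  next
    case False
    hence "\<bar>x\<bar> > R" by auto
    hence "R^2 \<le> \<bar>x\<bar>^2" using R0 by (intro power_mono) auto
    hence xb: "12 * b^2 \<le> x^2" using R2 by simp
    have "b^2 * x^2 / 2 \<le> (x^2/12) * x^2 / 2" using xb by (intro divide_right_mono mult_right_mono) auto
    hence "b^2*x^2/2 + -(x^4)/12 \<le> -(x^4)/24" by (simp add: power2_eq_square power4_eq_xxxx)
    hence e: "exp (b^2*x^2/2 + -(x^4)/12) \<le> exp (-(x^4)/24)" by (simp only: exp_le_cancel_iff)
    have eq: "exp (b^2*x^2/2 + -(x^4)/12) = exp (b^2*x^2/2) * exp (-(x^4)/12)" by (simp only: exp_add)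
    from e have "exp (b^2*x^2/2) * exp (-(x^4)/12) \<le> exp (-(x^4)/24)" unfolding eq .
    hence "exp (7*b^4/40) * (exp (b^2*x^2/2) * exp (-(x^4)/12)) \<le> exp (7*b^4/40) * exp (-(x^4)/24)"
      by (intro mult_left_mono) auto
    moreover have "H x = exp (7*b^4/40) * exp (-(x^4)/24)" using False by (simp add: H_def)
    ultimately show ?thesis by simp
  qed
  have "exp (7*b^4/40) * integral UNIV (\<lambda>x. exp (b^2*x^2/2) * exp (-(x^4)/12))
        = integral UNIV (\<lambda>x. exp (7*b^4/40) * (exp (b^2*x^2/2) * exp (-(x^4)/12)))" by simp
  also have "\<dots> \<le> (2*R) * exp (37*b^4/40) + exp (7*b^4/40) * (2 powr (1/4) * I_inf)"
    by (rule has_integral_le[OF integrable_integral[OF integrable_on_mult_right[OF Gi]] hH le])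
  also have "\<dots> \<le> K b"
  proof -
    have Ipos: "I_inf \<ge> 0" using I_inf_pos by simp
    have e1: "exp (37*b^4/40) \<le> exp (13*b^4/12)" using b0 by simp
    have e2: "exp (7*b^4/40) \<le> exp (13*b^4/12)" using b0 by simp
    have "2 powr (1/4) \<le> (2::real) powr 1" by (intro powr_mono) auto
    hence p: "2 powr (1/4) \<le> (2::real)" by simp
    have "(2*R) * exp (37*b^4/40) \<le> (2*R) * exp (13*b^4/12)" using e1 R0 by (intro mult_left_mono) auto
    moreover have "exp (7*b^4/40) * (2 powr (1/4) * I_inf) \<le> exp (13*b^4/12) * (2 * I_inf)"
      using e2 p Ipos by (intro mult_mono) auto
    ultimately show ?thesis unfolding K_def R_def by (simp add: algebra_simps)
  qed
  finally show ?thesis .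
qed


lemma sqrt_at_top: "filterlim (\<lambda>n::nat. sqrt (real n)) at_top at_top"
  by real_asymp

lemma powr_to_0: "((\<lambda>n::nat. real n powr (-1/4)) \<longlongrightarrow> 0) at_top"
  by real_asymp

theorem proposition4p3:
  fixes b \<eta> :: real
  assumes "b \<ge> 0" and "\<eta> > 0"
  shows "\<exists>n0::nat. \<forall>n\<ge>n0. \<forall>\<xi>::real.
           cmod (psi_hat n \<xi>) \<le> (1 + \<eta>) * K b * exp (- b * \<bar>\<xi>\<bar>)"
proof -
  note b0 = assms(1)
  have ev1: "eventually (\<lambda>n::nat. n \<ge> 1 \<and> sqrt (real n) \<ge> 2*b^2+2 \<and> b * real n powr (-1/4) < 1) at_top"
  proof (intro eventually_conj)
    show "eventually (\<lambda>n::nat. n \<ge> 1) at_top" by (rule eventually_ge_at_top)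
    show "eventually (\<lambda>n::nat. sqrt (real n) \<ge> 2*b^2+2) at_top"
      using sqrt_at_top by (simp add: filterlim_at_top)
    have "((\<lambda>n::nat. b * real n powr (-1/4)) \<longlongrightarrow> b * 0) at_top"
      by (intro tendsto_mult tendsto_const powr_to_0)
    thus "eventually (\<lambda>n::nat. b * real n powr (-1/4) < 1) at_top"
      by (intro order_tendstoD(2)) auto
  qed
  then obtain N where N: "\<And>n. n \<ge> N \<Longrightarrow> n \<ge> 1 \<and> sqrt (real n) \<ge> 2*b^2+2 \<and> b * real n powr (-1/4) < 1"
    unfolding eventually_sequentially by blast
  define F where "F = (\<lambda>k x. exp (b^2*x^2/2) * psi (k+N) x)"
  define G where "G = (\<lambda>x. exp (b^2*x^2/2) * exp (-(x^4)/12))"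
  define J where "J = (\<lambda>n. integral UNIV (\<lambda>x. exp (b^2*x^2/2) * psi n x))"
  have fi: "F k integrable_on UNIV" for k
    unfolding F_def using N[of "k+N"] by (intro wpsi_int) auto
  have hi: "(\<lambda>x. Cb b * exp (-(x^2)/2)) integrable_on UNIV"
    by (intro integrable_on_mult_right gauss_int)
  have le: "norm (F k x) \<le> Cb b * exp (-(x^2)/2)" for k x
    unfolding F_def using N[of "k+N"] dom_bound[of "k+N" b x] psi_nonneg[of "k+N" x] by auto
  have conv: "(\<lambda>k. F k x) \<longlonglongrightarrow> G x" for x
    unfolding F_def G_def
    by (intro tendsto_mult tendsto_const LIMSEQ_ignore_initial_segment psi_lim)
  have DC: "G integrable_on UNIV" "(\<lambda>k. integral UNIV (F k)) \<longlonglongrightarrow> integral UNIV G"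
    using dominated_convergence[OF fi hi le conv] by auto
  have JL: "J \<longlonglongrightarrow> integral UNIV G"
    using DC(2) unfolding F_def J_def by (rule LIMSEQ_offset)
  have LK: "exp (7*b^4/40) * integral UNIV G \<le> K b"
    unfolding G_def by (rule limit_bound[OF b0 DC(1)[unfolded G_def]])
  have Kpos: "K b > 0"
  proof -
    have "0 \<le> 2 * sqrt 3 * b" using b0 by simp
    hence "0 < 2 * sqrt 3 * b + I_inf" using I_inf_pos by linarith
    thus ?thesis unfolding K_def by simp
  qed
  have "(\<lambda>n. exp (7*b^4/40) * J n) \<longlonglongrightarrow> exp (7*b^4/40) * integral UNIV G"
    by (intro tendsto_mult tendsto_const JL)
  moreover have "exp (7*b^4/40) * integral UNIV G < (1 + \<eta>) * K b"
  proof -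
    have "0 < \<eta> * K b" using Kpos assms(2) by simp
    moreover have "(1 + \<eta>) * K b = K b + \<eta> * K b" by (simp add: algebra_simps)
    ultimately show ?thesis using LK by linarith
  qed
  ultimately have ev2: "eventually (\<lambda>n. exp (7*b^4/40) * J n < (1 + \<eta>) * K b) at_top"
    by (rule order_tendstoD(2))
  obtain n0 where n0: "\<And>n. n \<ge> n0 \<Longrightarrow> exp (7*b^4/40) * J n < (1 + \<eta>) * K b"
    using ev2 unfolding eventually_sequentially by blast
  show ?thesis
  proof (intro exI[of _ "max n0 N"] allI impI)
    fix n :: nat and \<xi> :: real
    assume n: "max n0 N \<le> n"
    have Nn: "n \<ge> 1 \<and> sqrt (real n) \<ge> 2*b^2+2 \<and> b * real n powr (-1/4) < 1" using N n by auto
    have "cmod (psi_hat n \<xi>) \<le> exp (- b * \<bar>\<xi>\<bar>) * (exp (7*b^4/40) * J n)"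
      unfolding J_def using Nn by (intro psi_hat_bound b0 wpsi_int) auto
    also have "\<dots> \<le> exp (- b * \<bar>\<xi>\<bar>) * ((1 + \<eta>) * K b)"
      using n0[of n] n by (intro mult_left_mono) auto
    also have "\<dots> = (1 + \<eta>) * K b * exp (- b * \<bar>\<xi>\<bar>)" by simp
    finally show "cmod (psi_hat n \<xi>) \<le> (1 + \<eta>) * K b * exp (- b * \<bar>\<xi>\<bar>)" .
  qed
qed


end
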